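(* There is an absolute constant $c>0$ such that the following holds. Let $N\ge1$, $M\ge4$ be integers, let $M'=2^n$ be the largest power of two with $M'(\log M'+2)\le M/2$ and assume $N\ge M'$. Let $b\le N$ be a positive integer multiple of $M'$ and let $k\in\mathbb N$. Then there is a 2D SLP $\mathcal G$ with at most $c\cdot(\log N+\log M+k)$ nonterminals such that for every $i\in[0..k]$, $\mathcal G$ contains a nonterminal $C_i$ with $\exp(C_i)=C_{N+i\cdot b,\,M}$.
   Context: Alphabet $\Sigma\supseteq\{0,1,\$\}$; logarithms are base 2. For $N=2^n$, $\mathsf{Bin}_N$ is the $N\times(n+2)$ array whose $i$-th row is $\$\,b_{i-1}\,\$$ with $b_{i-1}$ the $n$-bit binary representation of $i-1$; $\mathsf{ShiftBin}_N$ is the $2N\times N(n+2)$ array in which, for each $j\in[1..N]$, rows $j..j+N-1$ and columns $(j-1)(n+2)+1..j(n+2)$ form a copy of $\mathsf{Bin}_N$, all other entries being $0$. For integers $N\ge1$, $M\ge4$, let $M'=2^{n}$ be the largest power of two with $M'(\log M'+2)\le M/2$, assume $N\ge M'$, and let $B=\mathsf{ShiftBin}_{M'}$ (of size $2M'\times M'(\log M'+2)$). The 2D string $C_{N,M}$ of size $N\times M$ is the horizontal concatenation of three parts: (1) the left block, of width $M'(\log M'+2)$: $\lfloor N/(2M')\rfloor$ copies of $B$ stacked vertically, followed below by rows of $0$'s to reach height $N$; (2) the right block, of the same width: $M'$ rows of $0$'s, then $\lfloor (N-M')/(2M')\rfloor$ copies of $B$ stacked vertically, then rows of $0$'s to reach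 height $N$; (3) an all-$0$ block completing the width to $M$. A 2D SLP is a triple $(\mathcal V,\mathcal S,\rho)$ of nonterminals with dimensions, a start, and productions each being a character, a horizontal concatenation of two nonterminals of equal height, or a vertical concatenation of two nonterminals of equal width, with acyclic occurrence relation; $\exp(X)$ denotes the recursive expansion of $X$. *)

theory Defs
  imports Complex_Main
begin

datatype sym = S0 | S1 | SD

text \<open>A 2D string is represented as a list of rows (each row a list of symbols);
  all rows have equal length. Entries are 0-indexed.\<close>
type_synonym str2 = "sym list list"

definition mk2 :: "nat \<Rightarrow> nat \<Rightarrow> (nat \<Rightarrow> nat \<Rightarrow> sym) \<Rightarrow> str2" where
  "mk2 h w f = map (\<lambda>r. map (\<lambda>c. f r c) [0..<w]) [0..<h]"

definition width2 :: "str2 \<Rightarrow> nat" where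
  "width2 s = length (hd s)"

definition rect2 :: "str2 \<Rightarrow> bool" where
  "rect2 s \<longleftrightarrow> s \<noteq> [] \<and> (\<forall>r\<in>set s. length r = width2 s)"

text \<open>Bin_N with N = 2^n: row r (0-indexed) is dollar, n-bit binary of r (MSB first), dollar.\<close>
definition bin_entry :: "nat \<Rightarrow> nat \<Rightarrow> nat \<Rightarrow> sym" where
  "bin_entry n r c = (if c = 0 \<or> c = n + 1 then SD
      else if (r div 2 ^ (n - c)) mod 2 = 1 then S1 else S0)"

text \<open>ShiftBin_N with N = 2^n: size 2N x N(n+2).\<close>
definition shiftbin_entry :: "nat \<Rightarrow> nat \<Rightarrow> nat \<Rightarrow> sym" where
  "shiftbin_entry n r c = (let j = c div (n + 2); c' = c mod (n + 2) in
      if j \<le> r \<and> r < j + 2 ^ n then bin_entry n (r - j) c' else S0)"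

definition Mexp :: "nat \<Rightarrow> nat" where
  "Mexp M = (GREATEST n. real (2 ^ n * (n + 2)) \<le> real M / 2)"

definition Mprime :: "nat \<Rightarrow> nat" where
  "Mprime M = 2 ^ Mexp M"

definition C_entry :: "nat \<Rightarrow> nat \<Rightarrow> nat \<Rightarrow> nat \<Rightarrow> sym" where
  "C_entry N M r c = (let n = Mexp M; m = 2 ^ n; W = m * (n + 2) in
     if c < W then
       (if r div (2 * m) < N div (2 * m) then shiftbin_entry n (r mod (2 * m)) c else S0)
     else if c < 2 * W then
       (if r < m then S0
        else if (r - m) div (2 * m) < (N - m) div (2 * m)
             then shiftbin_entry n ((r - m) mod (2 * m)) (c - W) else S0)
     else S0)"

definition Cstr :: "nat \<Rightarrow> nat \<Rightarrow> str2" where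
  "Cstr N M = mk2 N M (C_entry N M)"

datatype rhs = Chr sym | HCat nat nat | VCat nat nat

record slp2 =
  nts :: "nat set"
  start :: nat
  prod :: "nat \<Rightarrow> rhs"

fun children :: "rhs \<Rightarrow> nat set" where
  "children (Chr a) = {}"
| "children (HCat Y Z) = {Y, Z}"
| "children (VCat Y Z) = {Y, Z}"

text \<open>Expansion relation: derives G X s means exp(X) = s. Horizontal
  concatenation requires equal heights, vertical requires equal widths.\<close>
inductive derives :: "slp2 \<Rightarrow> nat \<Rightarrow> str2 \<Rightarrow> bool" for G where
  chr: "X \<in> nts G \<Longrightarrow> prod G X = Chr a \<Longrightarrow> derives G X [[a]]"
| hcat: "X \<in> nts G \<Longrightarrow> prod G X = HCat Y Z \<Longrightarrow> derives G Y s \<Longrightarrow> derives G Z t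
         \<Longrightarrow> length s = length t \<Longrightarrow> derives G X (map2 (@) s t)"
| vcat: "X \<in> nts G \<Longrightarrow> prod G X = VCat Y Z \<Longrightarrow> derives G Y s \<Longrightarrow> derives G Z t
         \<Longrightarrow> width2 s = width2 t \<Longrightarrow> derives G X (s @ t)"

definition is_slp2 :: "slp2 \<Rightarrow> bool" where
  "is_slp2 G \<longleftrightarrow> finite (nts G) \<and> start G \<in> nts G
     \<and> (\<forall>X\<in>nts G. children (prod G X) \<subseteq> nts G)
     \<and> acyclic {(X, Y). X \<in> nts G \<and> Y \<in> children (prod G X)}
     \<and> (\<forall>X\<in>nts G. \<exists>s. derives G X s)"

end

theory Submission
  imports Defs "HOL-Library.Log_Nat"
begin

definition hcat2 :: "(nat \<Rightarrow> nat \<Rightarrow> sym) \<Rightarrow> (nat \<Rightarrow> nat \<Rightarrow> sym) \<Rightarrow> nat \<Rightarrow> nat \<Rightarrow> nat \<Rightarrow> sym" where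
  "hcat2 f g w1 = (\<lambda>r c. if c < w1 then f r c else g r (c - w1))"

definition vcat2 :: "(nat \<Rightarrow> nat \<Rightarrow> sym) \<Rightarrow> (nat \<Rightarrow> nat \<Rightarrow> sym) \<Rightarrow> nat \<Rightarrow> nat \<Rightarrow> nat \<Rightarrow> sym" where
  "vcat2 f g h1 = (\<lambda>r c. if r < h1 then f r c else g (r - h1) c)"

lemma length_mk2[simp]: "length (mk2 h w f) = h"
  by (simp add: mk2_def)

lemma nth_mk2[simp]: "r < h \<Longrightarrow> mk2 h w f ! r = map (\<lambda>c. f r c) [0..<w]"
  by (simp add: mk2_def)

lemma width_mk2[simp]: "0 < h \<Longrightarrow> width2 (mk2 h w f) = w"
  by (simp add: mk2_def width2_def hd_map upt_conv_Cons)

lemma concat_mk2: "0 < h \<Longrightarrow> 0 < w \<Longrightarrow> concat (mk2 h w f) \<noteq> []"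
  by (simp add: mk2_def upt_conv_Cons)

declare concat_eq_Nil_conv[simp del] Nil_eq_concat_conv[simp del]

lemma concat_mk2_iff[simp]: "concat (mk2 h w f) = [] \<longleftrightarrow> h = 0 \<or> w = 0"
  by (cases h; cases w) (auto simp: mk2_def upt_conv_Cons concat_eq_Nil_conv)

lemma mk2_ext: "(\<And>r c. r < h \<Longrightarrow> c < w \<Longrightarrow> f r c = g r c) \<Longrightarrow> mk2 h w f = mk2 h w g"
  by (simp add: mk2_def)

lemma mk2_hcat: "map2 (@) (mk2 h w1 f) (mk2 h w2 g) = mk2 h (w1 + w2) (hcat2 f g w1)"
  apply (rule nth_equalityI)
   apply simp
  apply simp
  apply (rule nth_equalityI)
   apply (auto simp: hcat2_def nth_append)
  done

lemma mk2_vcat: "mk2 h1 w f @ mk2 h2 w g = mk2 (h1 + h2) w (vcat2 f g h1)"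
  by (rule nth_equalityI) (auto simp: vcat2_def nth_append)

lemma mk2_11: "mk2 (Suc 0) (Suc 0) f = [[f 0 0]]"
  by (simp add: mk2_def)

definition dec :: "str2 set \<Rightarrow> str2 \<Rightarrow> bool" where
  "dec S s \<longleftrightarrow> (\<exists>a. s = [[a]])
     \<or> (\<exists>t\<in>S. \<exists>u\<in>S. length t = length u \<and> s = map2 (@) t u)
     \<or> (\<exists>t\<in>S. \<exists>u\<in>S. width2 t = width2 u \<and> s = t @ u)"

lemma dec_base: "dec S (mk2 (Suc 0) (Suc 0) f)"
  by (simp add: dec_def mk2_11)

lemma dec_H:
  assumes "mk2 h w1 f \<in> S" "mk2 h w2 g \<in> S" "w = w1 + w2"
    "\<And>r c. r < h \<Longrightarrow> c < w \<Longrightarrow> F r c = hcat2 f g w1 r c"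
  shows "dec S (mk2 h w F)"
proof -
  have "mk2 h w F = mk2 h (w1 + w2) (hcat2 f g w1)"
    unfolding assms(3)[symmetric] using assms(4) by (intro mk2_ext) auto
  hence "mk2 h w F = map2 (@) (mk2 h w1 f) (mk2 h w2 g)" by (simp add: mk2_hcat)
  moreover have "length (mk2 h w1 f) = length (mk2 h w2 g)" by simp
  ultimately show ?thesis using assms(1,2) unfolding dec_def by blast
qed

lemma dec_V:
  assumes "mk2 h1 w f \<in> S" "mk2 h2 w g \<in> S" "h = h1 + h2" "0 < h1" "0 < h2"
    "\<And>r c. r < h \<Longrightarrow> c < w \<Longrightarrow> F r c = vcat2 f g h1 r c"
  shows "dec S (mk2 h w F)"
proof -
  have "mk2 h w F = mk2 (h1 + h2) w (vcat2 f g h1)"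
    unfolding assms(3)[symmetric] using assms(6) by (intro mk2_ext) auto
  hence "mk2 h w F = mk2 h1 w f @ mk2 h2 w g" by (simp add: mk2_vcat)
  moreover have "width2 (mk2 h1 w f) = width2 (mk2 h2 w g)" using assms(4,5) by simp
  ultimately show ?thesis using assms(1,2) unfolding dec_def by blast
qed

lemma concat_map2: "length t = length u \<Longrightarrow>
   length (concat (map2 (@) t u)) = length (concat t) + length (concat u)"
proof (induction t arbitrary: u)
  case Nil thus ?case by simp
next
  case (Cons x t) thus ?case by (cases u) auto
qed

lemma slp_of_set:
  assumes fin: "finite S" and ne: "S \<noteq> {}" and nz: "\<forall>s\<in>S. concat s \<noteq> []"
    and dc: "\<forall>s\<in>S. dec S s"
  shows "\<exists>G. is_slp2 G \<and> card (nts G) = card S \<and> (\<forall>s\<in>S. \<exists>X\<in>nts G. derives G X s)"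
proof -
  obtain g where bij: "bij_betw g {0..<card S} S" using ex_bij_betw_nat_finite[OF fin] by blast
  define e where "e = the_inv_into {0..<card S} g"
  have ge: "t \<in> S \<Longrightarrow> g (e t) = t" for t
    unfolding e_def using bij by (simp add: f_the_inv_into_f_bij_betw)
  have el: "t \<in> S \<Longrightarrow> e t < card S" for t
    unfolding e_def using bij the_inv_into_into[of g "{0..<card S}" t "{0..<card S}"]
    by (auto simp: bij_betw_def)
  have gS: "X < card S \<Longrightarrow> g X \<in> S" for X using bij by (auto simp: bij_betw_def)
  define good where "good s \<rho> \<longleftrightarrow> (\<exists>a. s = [[a]] \<and> \<rho> = Chr a)
     \<or> (\<exists>t\<in>S. \<exists>u\<in>S. length t = length u \<and> s = map2 (@) t u \<and> \<rho> = HCat (e t) (e u))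
     \<or> (\<exists>t\<in>S. \<exists>u\<in>S. width2 t = width2 u \<and> s = t @ u \<and> \<rho> = VCat (e t) (e u))" for s \<rho>
  define G where "G = \<lparr>nts = {0..<card S}, start = 0, prod = (\<lambda>X. SOME \<rho>. good (g X) \<rho>)\<rparr>"
  have nG: "nts G = {0..<card S}" "start G = 0" by (simp_all add: G_def)
  have gd: "good (g X) (prod G X)" if "X < card S" for X
  proof -
    have "dec S (g X)" using dc gS[OF that] by blast
    hence "\<exists>\<rho>. good (g X) \<rho>" unfolding dec_def good_def by blast
    thus ?thesis unfolding G_def by (simp add: someI_ex)
  qed
  define sz where "sz s = length (concat s)" for s :: str2
  have key: "Y < card S \<and> sz (g Y) < sz (g X)" if "X < card S" "Y \<in> children (prod G X)" for X Y
  proof -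
    have "good (g X) (prod G X)" using gd that(1) by blast
    then consider (c) a where "prod G X = Chr a"
      | (h) t u where "t \<in> S" "u \<in> S" "length t = length u" "g X = map2 (@) t u" "prod G X = HCat (e t) (e u)"
      | (v) t u where "t \<in> S" "u \<in> S" "g X = t @ u" "prod G X = VCat (e t) (e u)"
      unfolding good_def by blast
    thus ?thesis
    proof cases
      case c thus ?thesis using that by simp
    next
      case h
      have "sz (g X) = sz t + sz u" using h concat_map2 unfolding sz_def by simp
      moreover have "sz t > 0" "sz u > 0" using nz h unfolding sz_def by auto
      ultimately show ?thesis using that h el ge by auto
    next
      case v
      have "sz (g X) = sz t + sz u" using v unfolding sz_def by simp
      moreover have "sz t > 0" "sz u > 0" using nz v unfolding sz_def by auto
      ultimately show ?thesis using that v el ge by auto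
    qed
  qed
  define R where "R = {(X, Y). X \<in> nts G \<and> Y \<in> children (prod G X)}"
  have tr: "(X, Y) \<in> R\<^sup>+ \<Longrightarrow> sz (g Y) < sz (g X) \<and> Y < card S" for X Y
  proof (induction rule: trancl_induct)
    case (base y)
    hence "y \<in> children (prod G X)" "X < card S" unfolding R_def nG by auto
    thus ?case using key by blast
  next
    case (step y z)
    hence "z \<in> children (prod G y)" "y < card S" unfolding R_def by auto
    hence "z < card S \<and> sz (g z) < sz (g y)" using key by blast
    thus ?case using step.IH by linarith
  qed
  have acyc: "acyclic R" unfolding acyclic_def using tr by blast
  have der: "X < card S \<Longrightarrow> derives G X (g X)" for X
  proof (induction X rule: measure_induct_rule[of "\<lambda>X. sz (g X)"])
    case (less X)
    have XG: "X \<in> nts G" using less.prems by (simp add: nG)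
    have "good (g X) (prod G X)" using gd less.prems by blast
    then consider (c) a where "g X = [[a]]" "prod G X = Chr a"
      | (h) t u where "t \<in> S" "u \<in> S" "length t = length u" "g X = map2 (@) t u" "prod G X = HCat (e t) (e u)"
      | (v) t u where "t \<in> S" "u \<in> S" "width2 t = width2 u" "g X = t @ u" "prod G X = VCat (e t) (e u)"
      unfolding good_def by blast
    thus ?case
    proof cases
      case c thus ?thesis using derives.chr[OF XG] by simp
    next
      case h
      have k1: "e t < card S \<and> sz (g (e t)) < sz (g X)" using key[OF less.prems, of "e t"] h by simp
      have k2: "e u < card S \<and> sz (g (e u)) < sz (g X)" using key[OF less.prems, of "e u"] h by simp
      have "derives G (e t) t" using less.IH[of "e t"] k1 ge h by simp
      moreover have "derives G (e u) u" using less.IH[of "e u"] k2 ge h by simp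
      ultimately show ?thesis using derives.hcat[OF XG h(5)] h by simp
    next
      case v
      have k1: "e t < card S \<and> sz (g (e t)) < sz (g X)" using key[OF less.prems, of "e t"] v by simp
      have k2: "e u < card S \<and> sz (g (e u)) < sz (g X)" using key[OF less.prems, of "e u"] v by simp
      have "derives G (e t) t" using less.IH[of "e t"] k1 ge v by simp
      moreover have "derives G (e u) u" using less.IH[of "e u"] k2 ge v by simp
      ultimately show ?thesis using derives.vcat[OF XG v(5)] v by simp
    qed
  qed
  have cpos: "0 < card S" using fin ne by (simp add: card_gt_0_iff)
  have "is_slp2 G"
    unfolding is_slp2_def
  proof (intro conjI)
    show "finite (nts G)" by (simp add: nG)
    show "start G \<in> nts G" using cpos by (simp add: nG)
    show "\<forall>X\<in>nts G. children (prod G X) \<subseteq> nts G"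
      using key by (auto simp: nG)
    show "acyclic {(X, Y). X \<in> nts G \<and> Y \<in> children (prod G X)}" using acyc R_def by simp
    show "\<forall>X\<in>nts G. \<exists>s. derives G X s"
    proof
      fix X assume "X \<in> nts G"
      hence "X < card S" by (simp add: nG)
      thus "\<exists>s. derives G X s" using der by blast
    qed
  qed
  moreover have "card (nts G) = card S" by (simp add: nG)
  moreover have "\<forall>s\<in>S. \<exists>X\<in>nts G. derives G X s"
  proof
    fix s assume "s \<in> S"
    hence 1: "e s < card S" "g (e s) = s" using el ge by auto
    hence "e s \<in> nts G" by (simp add: nG)
    moreover have "derives G (e s) s" using der[OF 1(1)] 1(2) by simp
    ultimately show "\<exists>X\<in>nts G. derives G X s" by blast
  qed
  ultimately show ?thesis by blast
qed


definition D :: "nat \<Rightarrow> nat \<Rightarrow> nat set" where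
  "D K x = (\<lambda>j. x div 2 ^ j) ` {..K} \<union> (\<lambda>j. x div 2 ^ j + 1) ` {..K}"

lemma D_finite[simp]: "finite (D K x)" by (simp add: D_def)

lemma D_card: "card (D K x) \<le> 2 * (K + 1)"
proof -
  have "card (D K x) \<le> card ((\<lambda>j. x div 2 ^ j) ` {..K}) + card ((\<lambda>j. x div 2 ^ j + 1) ` {..K})"
    unfolding D_def by (rule card_Un_le)
  also have "\<dots> \<le> card {..K} + card {..K}" by (intro add_mono card_image_le) auto
  finally show ?thesis by simp
qed

lemma D_self: "x \<in> D K x"
  unfolding D_def by (rule UnI1, rule image_eqI[of _ _ 0]) auto

lemma D_half_div: "t < 2 ^ K \<Longrightarrow> 1 \<le> t \<Longrightarrow> t div 2 \<in> D K t"
proof -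
  assume a: "t < 2 ^ K" "1 \<le> t"
  hence "K \<ge> 1" by (cases K) auto
  thus ?thesis unfolding D_def by (intro UnI1 image_eqI[of _ _ 1]) auto
qed

lemma D_half_rest: "t < 2 ^ K \<Longrightarrow> 1 \<le> t \<Longrightarrow> t - t div 2 \<in> D K t"
proof -
  assume a: "t < 2 ^ K" "1 \<le> t"
  hence K1: "K \<ge> 1" by (cases K) auto
  show ?thesis
  proof (cases "even t")
    case True
    hence "t - t div 2 = t div 2 ^ 1" by auto
    thus ?thesis unfolding D_def using K1 by (intro UnI1 image_eqI[of _ _ 1]) auto
  next
    case False
    hence "t - t div 2 = t div 2 + 1" by presburger
    hence "t - t div 2 = t div 2 ^ 1 + 1" by simp
    thus ?thesis unfolding D_def using K1 by (intro UnI2 image_eqI[of _ _ 1]) auto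
  qed
qed

lemma div_pow_Suc: "(x::nat) div 2 ^ j div 2 = x div 2 ^ Suc j"
  by (metis div_mult2_eq power_Suc2)

lemma halves_aux: "(A::nat) = 2 * B + A mod 2 \<Longrightarrow> y = A + 1 \<Longrightarrow>
  (y div 2 = B \<or> y div 2 = B + 1) \<and> (y - y div 2 = B \<or> y - y div 2 = B + 1)"
proof -
  assume h: "A = 2 * B + A mod 2" "y = A + 1"
  have "A mod 2 = 0 \<or> A mod 2 = 1" by arith
  thus ?thesis
  proof
    assume "A mod 2 = 0" hence "y = 2 * B + 1" using h by simp
    thus ?thesis by simp
  next
    assume "A mod 2 = 1" hence "y = 2 * (B + 1)" using h by simp
    thus ?thesis by simp
  qed
qed

lemma D_half:
  assumes "x < 2 ^ K" "y \<in> D K x" "2 \<le> y"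
  shows "y div 2 \<in> D K x \<and> y - y div 2 \<in> D K x"
proof -
  from assms(2) consider (a) j where "j \<le> K" "y = x div 2 ^ j" | (b) j where "j \<le> K" "y = x div 2 ^ j + 1"
    unfolding D_def by blast
  thus ?thesis
  proof cases
    case a
    have "2 ^ Suc j \<le> x"
    proof -
      have "2 \<le> x div 2 ^ j" using a assms by simp
      hence "2 * 2 ^ j \<le> x" by (metis div_greater_zero_iff le_div_geq less_mult_imp_div_less
            mult.commute not_less)
      thus ?thesis by simp
    qed
    hence "2 ^ Suc j < (2::nat) ^ K" using assms(1) by linarith
    hence jK: "Suc j \<le> K" using power_less_imp_less_exp[of "2::nat" "Suc j" K] by simp
    have h1: "y div 2 = x div 2 ^ Suc j" using a by (simp add: div_pow_Suc)
    have "y - y div 2 = y div 2 \<or> y - y div 2 = y div 2 + 1" by presburger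
    hence "y - y div 2 = x div 2 ^ Suc j \<or> y - y div 2 = x div 2 ^ Suc j + 1" using h1 by simp
    thus ?thesis using h1 jK unfolding D_def by (auto intro: image_eqI[of _ _ "Suc j"])
  next
    case b
    show ?thesis
    proof (cases "Suc j \<le> K")
      case True
      have h1: "x div 2 ^ j = 2 * (x div 2 ^ Suc j) + (x div 2 ^ j) mod 2"
        unfolding div_pow_Suc[symmetric] by (rule div_mult_mod_eq[symmetric, of _ 2, simplified mult.commute])
      have "(y div 2 = x div 2 ^ Suc j \<or> y div 2 = x div 2 ^ Suc j + 1) \<and>
            (y - y div 2 = x div 2 ^ Suc j \<or> y - y div 2 = x div 2 ^ Suc j + 1)"
        by (rule halves_aux[OF h1 b(2)])
      thus ?thesis using True unfolding D_def by (auto intro: image_eqI[of _ _ "Suc j"])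
    next
      case False
      hence "j = K" using b by simp
      hence "x div 2 ^ j = 0" using assms(1) by simp
      hence "y = 1" using b by simp
      thus ?thesis using assms by simp
    qed
  qed
qed

definition Z :: "nat \<Rightarrow> nat \<Rightarrow> str2" where
  "Z h w = mk2 h w (\<lambda>_ _. S0)"

definition ZF :: "nat \<Rightarrow> nat \<Rightarrow> nat \<Rightarrow> nat \<Rightarrow> str2 set" where
  "ZF K1 K2 h w = (if h = 0 then {} else
     (\<lambda>y. Z h y) ` (D K2 w - {0}) \<union> (\<lambda>x. Z x 1) ` (D K1 h - {0}))"

lemma ZF_finite[simp]: "finite (ZF K1 K2 h w)" by (simp add: ZF_def)

lemma ZF_card: "card (ZF K1 K2 h w) \<le> 2 * (K1 + 1) + 2 * (K2 + 1)"
proof (cases "h = 0")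
  case True thus ?thesis by (simp add: ZF_def)
next
  case False
  have "card (ZF K1 K2 h w) \<le> card ((\<lambda>y. Z h y) ` (D K2 w - {0})) + card ((\<lambda>x. Z x 1) ` (D K1 h - {0}))"
    using False unfolding ZF_def by (simp add: card_Un_le)
  also have "\<dots> \<le> card (D K2 w) + card (D K1 h)"
    by (intro add_mono order.trans[OF card_image_le] card_mono) auto
  also have "\<dots> \<le> 2 * (K1 + 1) + 2 * (K2 + 1)" using D_card[of K2 w] D_card[of K1 h] by simp
  finally show ?thesis .
qed

lemma ZF_mem: "0 < h \<Longrightarrow> 0 < w \<Longrightarrow> Z h w \<in> ZF K1 K2 h w"
  unfolding ZF_def using D_self[of w K2] by auto

lemma ZF_nz: "s \<in> ZF K1 K2 h w \<Longrightarrow> concat s \<noteq> []"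
  unfolding ZF_def Z_def by (auto split: if_splits)

lemma ZF_dec:
  assumes "h < 2 ^ K1" "w < 2 ^ K2" "ZF K1 K2 h w \<subseteq> S" "s \<in> ZF K1 K2 h w"
  shows "dec S s"
proof -
  have h0: "h \<noteq> 0" using assms(4) by (simp add: ZF_def split: if_splits)
  have col: "dec S (Z x 1)" if "x \<in> D K1 h" "x \<noteq> 0" for x
  proof (cases "x = 1")
    case True thus ?thesis by (simp add: Z_def dec_base)
  next
    case False
    hence x2: "2 \<le> x" using that by simp
    have m: "x div 2 \<in> D K1 h" "x - x div 2 \<in> D K1 h" using D_half[OF assms(1) that(1) x2] by auto
    have "Z (x div 2) 1 \<in> S" "Z (x - x div 2) 1 \<in> S"
      using m x2 assms(3) h0 unfolding ZF_def by auto
    thus ?thesis unfolding Z_def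
      by (rule dec_V) (use x2 in \<open>auto simp: vcat2_def\<close>)
  qed
  have row: "dec S (Z h y)" if "y \<in> D K2 w" "y \<noteq> 0" for y
  proof (cases "y = 1")
    case True thus ?thesis using col[of h] D_self h0 by simp
  next
    case False
    hence y2: "2 \<le> y" using that by simp
    have m: "y div 2 \<in> D K2 w" "y - y div 2 \<in> D K2 w" using D_half[OF assms(2) that(1) y2] by auto
    have "Z h (y div 2) \<in> S" "Z h (y - y div 2) \<in> S"
      using m y2 assms(3) h0 unfolding ZF_def by auto
    thus ?thesis unfolding Z_def
      by (rule dec_H) (use y2 in \<open>auto simp: hcat2_def\<close>)
  qed
  show ?thesis using assms(4) col row h0 unfolding ZF_def by (auto split: if_splits)
qed

definition Stk :: "nat \<Rightarrow> nat \<Rightarrow> (nat \<Rightarrow> nat \<Rightarrow> sym) \<Rightarrow> nat \<Rightarrow> str2" where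
  "Stk h w f y = mk2 (y * h) w (\<lambda>r c. f (r mod h) c)"

definition SF :: "nat \<Rightarrow> nat \<Rightarrow> (nat \<Rightarrow> nat \<Rightarrow> sym) \<Rightarrow> nat \<Rightarrow> nat \<Rightarrow> nat \<Rightarrow> (nat \<Rightarrow> nat) \<Rightarrow> nat \<Rightarrow> str2 set" where
  "SF h w f K x0 t xs k = (\<lambda>y. Stk h w f y) ` ((D K x0 \<union> D K t) - {0})
     \<union> (\<lambda>i. Stk h w f (xs i)) ` {i. i \<le> k \<and> xs i \<noteq> 0}"

lemma SF_finite[simp]: "finite (SF h w f K x0 t xs k)" by (simp add: SF_def)

lemma SF_card: "card (SF h w f K x0 t xs k) \<le> 4 * (K + 1) + (k + 1)"
proof -
  have "card (SF h w f K x0 t xs k) \<le> card ((\<lambda>y. Stk h w f y) ` ((D K x0 \<union> D K t) - {0}))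
      + card ((\<lambda>i. Stk h w f (xs i)) ` {i. i \<le> k \<and> xs i \<noteq> 0})"
    unfolding SF_def by (rule card_Un_le)
  also have "\<dots> \<le> card (D K x0 \<union> D K t) + card {..k}"
    by (intro add_mono order.trans[OF card_image_le] card_mono) auto
  also have "\<dots> \<le> (card (D K x0) + card (D K t)) + (k + 1)"
    by (intro add_mono card_Un_le) auto
  also have "\<dots> \<le> 4 * (K + 1) + (k + 1)" using D_card[of K x0] D_card[of K t] by simp
  finally show ?thesis .
qed

lemma SF_nz: "0 < h \<Longrightarrow> 0 < w \<Longrightarrow> s \<in> SF h w f K x0 t xs k \<Longrightarrow> concat s \<noteq> []"
  unfolding SF_def Stk_def by auto

lemma Stk_1: "0 < h \<Longrightarrow> Stk h w f 1 = mk2 h w f"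
  unfolding Stk_def by (auto intro: mk2_ext)

lemma dec_Stk:
  assumes "Stk h w f y1 \<in> S" "Stk h w f y2 \<in> S" "0 < y1" "0 < y2" "0 < h"
  shows "dec S (Stk h w f (y1 + y2))"
  unfolding Stk_def
proof (rule dec_V[OF assms(1)[unfolded Stk_def] assms(2)[unfolded Stk_def]])
  show "(y1 + y2) * h = y1 * h + y2 * h" by (simp add: algebra_simps)
  show "0 < y1 * h" "0 < y2 * h" using assms by auto
  fix r c assume "r < (y1 + y2) * h" "c < w"
  show "f (r mod h) c = vcat2 (\<lambda>r c. f (r mod h) c) (\<lambda>r c. f (r mod h) c) (y1 * h) r c"
  proof (cases "r < y1 * h")
    case False
    then obtain r' where "r = y1 * h + r'" by (metis le_add_diff_inverse not_less)
    thus ?thesis by (simp add: vcat2_def)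
  qed (simp add: vcat2_def)
qed

lemma SF_dec:
  assumes X: "dec S (mk2 h w f)" and h: "0 < h" and K: "x0 < 2 ^ K" "t < 2 ^ K"
    and xs0: "xs 0 = x0" and step: "\<And>i. xs (Suc i) = xs i + t div 2 \<or> xs (Suc i) = xs i + (t - t div 2)"
    and sub: "SF h w f K x0 t xs k \<subseteq> S" and s: "s \<in> SF h w f K x0 t xs k"
  shows "dec S s"
proof -
  have inS: "Stk h w f y \<in> S" if "y \<in> D K x0 \<union> D K t" "y \<noteq> 0" for y
    using sub that unfolding SF_def by auto
  have inS2: "Stk h w f (xs i) \<in> S" if "i \<le> k" "xs i \<noteq> 0" for i
    using sub that unfolding SF_def by auto
  have fam: "dec S (Stk h w f y)" if "y \<in> D K x0 \<union> D K t" "y \<noteq> 0" for y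
  proof (cases "y = 1")
    case True
    thus ?thesis using X Stk_1[OF h] by simp
  next
    case False
    hence y2: "2 \<le> y" using that by simp
    have m: "y div 2 \<in> D K x0 \<union> D K t" "y - y div 2 \<in> D K x0 \<union> D K t"
      using D_half[OF K(1) _ y2] D_half[OF K(2) _ y2] that(1) by auto
    have "dec S (Stk h w f (y div 2 + (y - y div 2)))"
      by (rule dec_Stk) (use inS m y2 h in auto)
    thus ?thesis using y2 by simp
  qed
  have dinD: "d \<in> D K t" if "d = t div 2 \<or> d = t - t div 2" "d \<noteq> 0" for d
  proof -
    have "1 \<le> t" using that by auto
    thus ?thesis using that D_half_div[OF K(2)] D_half_rest[OF K(2)] by auto
  qed
  have chain: "i \<le> k \<Longrightarrow> xs i \<noteq> 0 \<Longrightarrow> dec S (Stk h w f (xs i))" for i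
  proof (induction i)
    case 0 thus ?case using fam[of x0] D_self[of x0 K] xs0 by simp
  next
    case (Suc i)
    obtain d where d: "xs (Suc i) = xs i + d" "d = t div 2 \<or> d = t - t div 2" using step[of i] by blast
    show ?case
    proof (cases "xs i = 0")
      case True
      thus ?thesis using d fam[of d] dinD[of d] Suc.prems by auto
    next
      case False
      show ?thesis
      proof (cases "d = 0")
        case True thus ?thesis using d Suc False by simp
      next
        case dF: False
        have "dec S (Stk h w f (xs i + d))"
          by (rule dec_Stk) (use inS2[of i] inS[of d] dinD[of d] d Suc.prems False dF h in auto)
        thus ?thesis using d by simp
      qed
    qed
  qed
  show ?thesis using s fam chain unfolding SF_def by auto
qed


definition col :: "sym \<Rightarrow> nat \<Rightarrow> str2" where "col a j = mk2 (2 ^ j) 1 (\<lambda>_ _. a)"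
definition Tailf :: "nat \<Rightarrow> nat \<Rightarrow> nat \<Rightarrow> sym" where "Tailf j = (\<lambda>r c. bin_entry j r (c + 1))"
definition Tail :: "nat \<Rightarrow> str2" where "Tail j = mk2 (2 ^ j) (Suc j) (Tailf j)"
definition HZ :: "nat \<Rightarrow> str2" where "HZ j = mk2 (2 ^ j) (Suc (Suc j)) (hcat2 (\<lambda>_ _. S0) (Tailf j) 1)"
definition HO :: "nat \<Rightarrow> str2" where "HO j = mk2 (2 ^ j) (Suc (Suc j)) (hcat2 (\<lambda>_ _. S1) (Tailf j) 1)"
definition Bin :: "nat \<Rightarrow> str2" where "Bin n = mk2 (2 ^ n) (n + 2) (bin_entry n)"
definition FB :: "nat \<Rightarrow> str2 set" where
  "FB n = col S0 ` {..n} \<union> col S1 ` {..n} \<union> col SD ` {..n} \<union> Tail ` {..n} \<union> HZ ` {..n}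
     \<union> HO ` {..n} \<union> {Bin n}"

lemma bit_shift:
  assumes "e < j" shows "((2::nat) ^ j + r) div 2 ^ e mod 2 = r div 2 ^ e mod 2"
proof -
  have "(2::nat) ^ j = 2 ^ (j - e) * 2 ^ e" using assms by (simp add: power_add[symmetric])
  hence "((2::nat) ^ j + r) div 2 ^ e = 2 ^ (j - e) + r div 2 ^ e" by simp
  moreover have "even ((2::nat) ^ (j - e))" using assms by simp
  then obtain q where "(2::nat) ^ (j - e) = 2 * q" by blast
  ultimately show ?thesis by simp
qed

lemma tail_step:
  assumes "r < 2 ^ Suc j" "c < Suc (Suc j)"
  shows "Tailf (Suc j) r c = vcat2 (hcat2 (\<lambda>_ _. S0) (Tailf j) 1) (hcat2 (\<lambda>_ _. S1) (Tailf j) 1) (2 ^ j) r c"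
proof (cases c)
  case 0
  show ?thesis
  proof (cases "r < 2 ^ j")
    case True thus ?thesis using 0 by (simp add: Tailf_def vcat2_def hcat2_def bin_entry_def)
  next
    case False
    then obtain r' where r': "r = 2 ^ j + r'" by (metis le_add_diff_inverse not_less)
    hence "r' < 2 ^ j" using assms(1) by simp
    hence "r div 2 ^ j = 1" using r' by simp
    thus ?thesis using 0 False by (simp add: Tailf_def vcat2_def hcat2_def bin_entry_def)
  qed
next
  case (Suc c')
  hence c'j: "c' \<le> j" using assms(2) by simp
  show ?thesis
  proof (cases "r < 2 ^ j")
    case True thus ?thesis using Suc by (simp add: Tailf_def vcat2_def hcat2_def bin_entry_def)
  next
    case False
    then obtain r' where r': "r = 2 ^ j + r'" by (metis le_add_diff_inverse not_less)
    show ?thesis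
    proof (cases "c' = j")
      case True thus ?thesis using Suc r' by (simp add: Tailf_def vcat2_def hcat2_def bin_entry_def)
    next
      case False
      hence "j - Suc c' < j" using c'j by simp
      hence "(2 ^ j + r') div 2 ^ (j - Suc c') mod 2 = r' div 2 ^ (j - Suc c') mod 2" by (rule bit_shift)
      thus ?thesis using Suc r' False c'j by (simp add: Tailf_def vcat2_def hcat2_def bin_entry_def)
    qed
  qed
qed

lemma FB_dec:
  assumes sub: "FB n \<subseteq> S" and s: "s \<in> FB n"
  shows "dec S s"
proof -
  have inS: "col a j \<in> S" "Tail j \<in> S" "HZ j \<in> S" "HO j \<in> S"
    if "j \<le> n" "a \<in> {S0, S1, SD}" for j a
    using sub that unfolding FB_def by auto
  have dcol: "dec S (col a j)" if "j \<le> n" "a \<in> {S0, S1, SD}" for j a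
    using that
  proof (induction j)
    case 0 thus ?case by (simp add: col_def dec_base)
  next
    case (Suc j)
    have "col a j \<in> S" using inS Suc.prems by simp
    hence m: "mk2 (2 ^ j) 1 (\<lambda>_ _. a) \<in> S" by (simp add: col_def)
    show ?case unfolding col_def
      by (rule dec_V[OF m m]) (auto simp: vcat2_def)
  qed
  have dtail: "dec S (Tail j)" if "j \<le> n" for j
  proof (cases j)
    case 0 thus ?thesis by (simp add: Tail_def dec_base)
  next
    case (Suc j')
    have m1: "mk2 (2 ^ j') (Suc (Suc j')) (hcat2 (\<lambda>_ _. S0) (Tailf j') 1) \<in> S"
      using inS(3)[of j' S0] that Suc by (simp add: HZ_def)
    have m2: "mk2 (2 ^ j') (Suc (Suc j')) (hcat2 (\<lambda>_ _. S1) (Tailf j') 1) \<in> S"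
      using inS(4)[of j' S0] that Suc by (simp add: HO_def)
    show ?thesis unfolding Tail_def Suc
    proof (rule dec_V[OF m1 m2])
      fix r c :: nat assume "r < 2 ^ Suc j'" "c < Suc (Suc j')"
      thus "Tailf (Suc j') r c = vcat2 (hcat2 (\<lambda>_ _. S0) (Tailf j') 1) (hcat2 (\<lambda>_ _. S1) (Tailf j') 1) (2 ^ j') r c"
        by (rule tail_step)
    qed auto
  qed
  have dhz: "dec S (HZ j)" "dec S (HO j)" if "j \<le> n" for j
  proof -
    have m1: "mk2 (2 ^ j) 1 (\<lambda>_ _. S0) \<in> S" "mk2 (2 ^ j) 1 (\<lambda>_ _. S1) \<in> S"
      using inS(1)[of j S0] inS(1)[of j S1] that by (auto simp: col_def)
    have m2: "mk2 (2 ^ j) (Suc j) (Tailf j) \<in> S" using inS(2)[of j S0] that by (simp add: Tail_def)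
    show "dec S (HZ j)" unfolding HZ_def by (rule dec_H[OF m1(1) m2]) auto
    show "dec S (HO j)" unfolding HO_def by (rule dec_H[OF m1(2) m2]) auto
  qed
  have dbin: "dec S (Bin n)"
  proof -
    have m1: "mk2 (2 ^ n) 1 (\<lambda>_ _. SD) \<in> S" using inS(1)[of n SD] by (simp add: col_def)
    have m2: "mk2 (2 ^ n) (Suc n) (Tailf n) \<in> S" using inS(2)[of n S0] by (simp add: Tail_def)
    show ?thesis unfolding Bin_def
      by (rule dec_H[OF m1 m2]) (auto simp: hcat2_def Tailf_def bin_entry_def)
  qed
  show ?thesis using s dcol dtail dhz dbin unfolding FB_def by auto
qed

lemma FB_card: "card (FB n) \<le> 6 * (n + 1) + 1"
proof -
  have c: "card (f ` {..n}) \<le> n + 1" for f :: "nat \<Rightarrow> str2"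
    using card_image_le[of "{..n}" f] by simp
  have "card (FB n) \<le> card (col S0 ` {..n}) + card (col S1 ` {..n}) + card (col SD ` {..n})
     + card (Tail ` {..n}) + card (HZ ` {..n}) + card (HO ` {..n}) + card {Bin n}"
    unfolding FB_def by (intro order.trans[OF card_Un_le] add_mono order.refl)
  also have "\<dots> \<le> 6 * (n + 1) + 1" using c[of "col S0"] c[of "col S1"] c[of "col SD"] c[of Tail]
      c[of HZ] c[of HO] by simp
  finally show ?thesis .
qed

lemma FB_finite: "finite (FB n)" by (simp add: FB_def)

lemma FB_nz: "s \<in> FB n \<Longrightarrow> concat s \<noteq> []"
  unfolding FB_def col_def Tail_def HZ_def HO_def Bin_def by auto


definition T :: "nat \<Rightarrow> nat \<Rightarrow> str2" where
  "T n j = mk2 (2 ^ j - 1 + 2 ^ n) (2 ^ j * (n + 2)) (shiftbin_entry n)"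
definition Zs :: "nat \<Rightarrow> nat \<Rightarrow> str2" where "Zs n j = Z (2 ^ j) (2 ^ j * (n + 2))"
definition ZZ :: "nat \<Rightarrow> nat \<Rightarrow> str2" where "ZZ n j = Z (2 ^ j) (2 ^ Suc j * (n + 2))"
definition TL :: "nat \<Rightarrow> nat \<Rightarrow> str2" where
  "TL n j = mk2 (2 ^ Suc j - 1 + 2 ^ n) (2 ^ j * (n + 2)) (vcat2 (shiftbin_entry n) (\<lambda>_ _. S0) (2 ^ j - 1 + 2 ^ n))"
definition TR :: "nat \<Rightarrow> nat \<Rightarrow> str2" where
  "TR n j = mk2 (2 ^ Suc j - 1 + 2 ^ n) (2 ^ j * (n + 2)) (vcat2 (\<lambda>_ _. S0) (shiftbin_entry n) (2 ^ j))"
definition BB :: "nat \<Rightarrow> str2" where "BB n = mk2 (2 * 2 ^ n) (2 ^ n * (n + 2)) (shiftbin_entry n)"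
definition FT :: "nat \<Rightarrow> str2 set" where
  "FT n = T n ` {..n} \<union> TL n ` {..n} \<union> TR n ` {..n} \<union> Zs n ` {..n} \<union> ZZ n ` {..n} \<union> {BB n}"

lemma pow2_sum1[simp]: "Suc 0 < (2::nat) ^ a + 2 ^ b" "\<not> (2::nat) ^ a + 2 ^ b \<le> Suc 0"
  "Suc 0 < 2 * (2::nat) ^ a + 2 ^ b" "\<not> 2 * (2::nat) ^ a + 2 ^ b \<le> Suc 0"
proof -
  have "1 \<le> (2::nat) ^ a" "1 \<le> (2::nat) ^ b" by simp_all
  thus "Suc 0 < (2::nat) ^ a + 2 ^ b" "\<not> (2::nat) ^ a + 2 ^ b \<le> Suc 0"
    "Suc 0 < 2 * (2::nat) ^ a + 2 ^ b" "\<not> 2 * (2::nat) ^ a + 2 ^ b \<le> Suc 0" by linarith+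
qed

lemma sb_div: "(s * (n + 2) + c) div (n + 2) = s + c div (n + 2::nat)"
  "(s * (n + 2) + c) mod (n + 2) = c mod (n + 2::nat)"
   apply (subst add.commute[of "s * (n + 2)" c], rule div_mult_self1, simp)
  apply (subst add.commute[of "s * (n + 2)" c], rule mod_mult_self1)
  done

lemma sb_left:
  assumes "c < s * (n + 2)" "s - 1 + 2 ^ n \<le> r" "0 < s"
  shows "shiftbin_entry n r c = S0"
proof -
  have "c div (n + 2) < s" using assms(1) by (simp add: less_mult_imp_div_less)
  hence "\<not> r < c div (n + 2) + 2 ^ n" using assms(2,3) by linarith
  thus ?thesis unfolding shiftbin_entry_def Let_def by simp
qed

lemma sb_right0:
  assumes "r < s" shows "shiftbin_entry n r (s * (n + 2) + c) = S0"
  using assms unfolding shiftbin_entry_def Let_def sb_div by simp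

lemma sb_right:
  "shiftbin_entry n (s + r) (s * (n + 2) + c) = shiftbin_entry n r c"
  unfolding shiftbin_entry_def Let_def sb_div by simp

lemma T0: "T n 0 = Bin n"
  unfolding T_def Bin_def by (auto intro!: mk2_ext simp: shiftbin_entry_def Let_def)

lemma T_step:
  assumes "r < 2 ^ Suc j - 1 + 2 ^ n" "c < 2 ^ Suc j * (n + 2)"
  shows "shiftbin_entry n r c = hcat2 (vcat2 (shiftbin_entry n) (\<lambda>_ _. S0) (2 ^ j - 1 + 2 ^ n))
          (vcat2 (\<lambda>_ _. S0) (shiftbin_entry n) (2 ^ j)) (2 ^ j * (n + 2)) r c"
proof (cases "c < 2 ^ j * (n + 2)")
  case cT: True
  show ?thesis
  proof (cases "r < 2 ^ j - 1 + 2 ^ n")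
    case True thus ?thesis using cT by (simp add: hcat2_def vcat2_def)
  next
    case False
    hence "shiftbin_entry n r c = S0" using sb_left[of c "2 ^ j" n r] cT by simp
    thus ?thesis using cT False by (simp add: hcat2_def vcat2_def)
  qed
next
  case False
  then obtain c2 where c2: "c = 2 ^ j * (n + 2) + c2" by (metis le_add_diff_inverse not_less)
  show ?thesis
  proof (cases "r < 2 ^ j")
    case True
    thus ?thesis using c2 sb_right0[of r "2 ^ j" n c2] by (simp add: hcat2_def vcat2_def)
  next
    case rF: False
    then obtain r2 where r2: "r = 2 ^ j + r2" by (metis le_add_diff_inverse not_less)
    thus ?thesis using c2 sb_right[of n "2 ^ j" r2 c2] by (simp add: hcat2_def vcat2_def)
  qed
qed

lemma FT_dec:
  assumes sub: "FT n \<subseteq> S" and fb: "FB n \<subseteq> S"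
    and z1: "Z 1 (n + 2) \<in> S" "dec S (Z 1 (n + 2))"
    and z2: "Z 1 (2 ^ n * (n + 2)) \<in> S" "dec S (Z 1 (2 ^ n * (n + 2)))"
    and s: "s \<in> FT n"
  shows "dec S s"
proof -
  have inS: "T n j \<in> S" "TL n j \<in> S" "TR n j \<in> S" "Zs n j \<in> S" "ZZ n j \<in> S" if "j \<le> n" for j
    using sub that unfolding FT_def by auto
  have dT: "dec S (T n j)" if "j \<le> n" for j
  proof (cases j)
    case 0
    have "Bin n \<in> FB n" by (simp add: FB_def)
    thus ?thesis using FB_dec[OF fb] 0 T0 by simp
  next
    case (Suc j')
    have m1: "mk2 (2 ^ Suc j' - 1 + 2 ^ n) (2 ^ j' * (n + 2)) (vcat2 (shiftbin_entry n) (\<lambda>_ _. S0) (2 ^ j' - 1 + 2 ^ n)) \<in> S"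
      using inS(2)[of j'] that Suc by (simp add: TL_def)
    have m2: "mk2 (2 ^ Suc j' - 1 + 2 ^ n) (2 ^ j' * (n + 2)) (vcat2 (\<lambda>_ _. S0) (shiftbin_entry n) (2 ^ j')) \<in> S"
      using inS(3)[of j'] that Suc by (simp add: TR_def)
    show ?thesis unfolding T_def Suc
    proof (rule dec_H[OF m1 m2])
      show "2 ^ Suc j' * (n + 2) = 2 ^ j' * (n + 2) + 2 ^ j' * (n + 2)" by simp
      fix r c :: nat assume "r < 2 ^ Suc j' - 1 + 2 ^ n" "c < 2 ^ Suc j' * (n + 2)"
      thus "shiftbin_entry n r c = hcat2 (vcat2 (shiftbin_entry n) (\<lambda>_ _. S0) (2 ^ j' - 1 + 2 ^ n))
          (vcat2 (\<lambda>_ _. S0) (shiftbin_entry n) (2 ^ j')) (2 ^ j' * (n + 2)) r c"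
        by (rule T_step)
    qed
  qed
  have mT: "mk2 (2 ^ j - 1 + 2 ^ n) (2 ^ j * (n + 2)) (shiftbin_entry n) \<in> S" if "j \<le> n" for j
    using inS(1)[OF that] by (simp add: T_def)
  have mZs: "mk2 (2 ^ j) (2 ^ j * (n + 2)) (\<lambda>_ _. S0) \<in> S" if "j \<le> n" for j
    using inS(4)[OF that] by (simp add: Zs_def Z_def)
  have mZZ: "mk2 (2 ^ j) (2 ^ Suc j * (n + 2)) (\<lambda>_ _. S0) \<in> S" if "j \<le> n" for j
    using inS(5)[OF that] by (simp add: ZZ_def Z_def)
  have dTL: "dec S (TL n j)" "dec S (TR n j)" if "j \<le> n" for j
  proof -
    show "dec S (TL n j)" unfolding TL_def
      by (rule dec_V[OF mT[OF that] mZs[OF that]]) auto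
    show "dec S (TR n j)" unfolding TR_def
      by (rule dec_V[OF mZs[OF that] mT[OF that]]) auto
  qed
  have dZZ: "dec S (ZZ n j)" if "j \<le> n" for j
    unfolding ZZ_def Z_def by (rule dec_H[OF mZs[OF that] mZs[OF that]]) (auto simp: hcat2_def)
  have dZs: "dec S (Zs n j)" if "j \<le> n" for j
  proof (cases j)
    case 0 thus ?thesis using z1 by (simp add: Zs_def)
  next
    case (Suc j')
    show ?thesis unfolding Zs_def Z_def Suc
      by (rule dec_V[OF mZZ mZZ]) (use that Suc in \<open>auto simp: vcat2_def\<close>)
  qed
  have dBB: "dec S (BB n)"
  proof -
    have m2: "mk2 1 (2 ^ n * (n + 2)) (\<lambda>_ _. S0) \<in> S" using z2 by (simp add: Z_def)
    show ?thesis unfolding BB_def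
    proof (rule dec_V[OF mT[OF order.refl] m2])
      fix r c :: nat assume a: "r < 2 * 2 ^ n" "c < 2 ^ n * (n + 2)"
      show "shiftbin_entry n r c = vcat2 (shiftbin_entry n) (\<lambda>_ _. S0) (2 ^ n - 1 + 2 ^ n) r c"
      proof (cases "r < 2 ^ n - 1 + 2 ^ n")
        case False
        thus ?thesis using sb_left[of c "2 ^ n" n r] a by (simp add: vcat2_def)
      qed (simp add: vcat2_def)
    qed auto
  qed
  show ?thesis using s dT dTL dZs dZZ dBB unfolding FT_def by auto
qed

lemma FT_card: "card (FT n) \<le> 5 * (n + 1) + 1"
proof -
  have c: "card (f ` {..n}) \<le> n + 1" for f :: "nat \<Rightarrow> str2"
    using card_image_le[of "{..n}" f] by simp
  have "card (FT n) \<le> card (T n ` {..n}) + card (TL n ` {..n}) + card (TR n ` {..n})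
     + card (Zs n ` {..n}) + card (ZZ n ` {..n}) + card {BB n}"
    unfolding FT_def by (intro order.trans[OF card_Un_le] add_mono order.refl)
  also have "\<dots> \<le> 5 * (n + 1) + 1" using c[of "T n"] c[of "TL n"] c[of "TR n"] c[of "Zs n"]
      c[of "ZZ n"] by simp
  finally show ?thesis .
qed

lemma FT_finite: "finite (FT n)" by (simp add: FT_def)

lemma FT_nz: "s \<in> FT n \<Longrightarrow> concat s \<noteq> []"
  unfolding FT_def T_def TL_def TR_def Zs_def ZZ_def BB_def Z_def
  by (auto simp: add_pos_pos)


lemma Mexp_bound: assumes "4 \<le> M" shows "2 * (2 ^ Mexp M * (Mexp M + 2)) \<le> M"
proof -
  let ?P = "\<lambda>n. real (2 ^ n * (n + 2)) \<le> real M / 2"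
  have P0: "?P 0" using assms by simp
  have bd: "y \<le> M" if "?P y" for y
  proof -
    have "real (2 * (2 ^ y * (y + 2))) \<le> real M" using that by simp
    hence a: "2 * (2 ^ y * (y + 2)) \<le> M" by (simp only: of_nat_le_iff)
    have "y < 2 ^ y" by simp
    moreover have "(2::nat) ^ y \<le> 2 * (2 ^ y * (y + 2))" by simp
    ultimately show ?thesis using a by linarith
  qed
  have "?P (Mexp M)" unfolding Mexp_def
    apply (rule GreatestI_nat[of ?P 0 M])
     apply (rule P0)
    apply (erule bd)
    done
  hence "real (2 * (2 ^ Mexp M * (Mexp M + 2))) \<le> real M" by simp
  thus ?thesis by (simp only: of_nat_le_iff)
qed

lemma divstep:
  assumes m: "0 < (m::nat)"
  shows "(x + t * m) div (2 * m) = x div (2 * m) + t div 2 \<or>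
         (x + t * m) div (2 * m) = x div (2 * m) + (t - t div 2)"
proof -
  define u where "u = t div 2"
  define e where "e = t mod 2"
  have t: "t = 2 * u + e" "e < 2" unfolding u_def e_def by simp_all
  have eq: "x + t * m = (x + e * m) + u * (2 * m)" by (simp add: t algebra_simps)
  have "(x + t * m) div (2 * m) = ((x + e * m) + u * (2 * m)) div (2 * m)" unfolding eq ..
  also have "\<dots> = u + (x + e * m) div (2 * m)" by (rule div_mult_self1) (use m in simp)
  finally have d: "(x + t * m) div (2 * m) = (x + e * m) div (2 * m) + u" by simp
  have lo: "x div (2 * m) \<le> (x + e * m) div (2 * m)" by (rule div_le_mono) simp
  have "x + e * m \<le> x + 1 * (2 * m)" using t(2) by (cases e) auto
  hence "(x + e * m) div (2 * m) \<le> (x + 1 * (2 * m)) div (2 * m)" by (rule div_le_mono)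
  hence hi: "(x + e * m) div (2 * m) \<le> x div (2 * m) + 1" using m by simp
  show ?thesis
  proof (cases "e = 0")
    case True thus ?thesis using d u_def by simp
  next
    case False
    hence "e = 1" using t by simp
    hence "t - t div 2 = u + 1" using t u_def by simp
    thus ?thesis using d lo hi u_def by linarith
  qed
qed

lemma jm_mod: "((N::nat) + j * m) mod (2 * m) = N mod (2 * m) \<or> (N + j * m) mod (2 * m) = (N + m) mod (2 * m)"
proof (cases "even j")
  case True
  then obtain q where "j = 2 * q" by blast
  hence e: "N + j * m = N + q * (2 * m)" by simp
  have "(N + j * m) mod (2 * m) = N mod (2 * m)" unfolding e by (rule mod_mult_self1)
  thus ?thesis by simp
next
  case False
  then obtain q where "j = 2 * q + 1" using oddE by blast
  hence e: "N + j * m = (N + m) + q * (2 * m)" by simp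
  have "(N + j * m) mod (2 * m) = (N + m) mod (2 * m)" unfolding e by (rule mod_mult_self1)
  thus ?thesis by simp
qed

locale cp =
  fixes N M b k :: nat
  assumes N1: "1 \<le> N" and M4: "4 \<le> M" and mN: "Mprime M \<le> N" and b0: "0 < b" and bN: "b \<le> N"
    and mb: "Mprime M dvd b"
begin

abbreviation "nn \<equiv> Mexp M"
abbreviation "mm \<equiv> (2::nat) ^ Mexp M"
abbreviation "WW \<equiv> (2::nat) ^ Mexp M * (Mexp M + 2)"
abbreviation "pp \<equiv> M - 2 * WW"
abbreviation "tt \<equiv> b div mm"
abbreviation "KN \<equiv> floorlog 2 N + 1"
abbreviation "KM \<equiv> floorlog 2 M"
abbreviation "sb \<equiv> shiftbin_entry (Mexp M)"

definition Ni :: "nat \<Rightarrow> nat" where "Ni i = N + i * b"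

lemma WW2: "2 * WW \<le> M" using Mexp_bound[OF M4] .
lemma mm_pos: "0 < mm" by simp
lemma mmN: "mm \<le> N" using mN by (simp add: Mprime_def)
lemma b_eq: "b = tt * mm" using mb by (simp add: Mprime_def)
lemma tt_pos: "0 < tt" using b_eq b0 by (metis gr0I mult_is_0)
lemma tt_N: "tt \<le> N" using bN div_le_dividend[of b mm] by linarith
lemma KN_bd: "2 * N < 2 ^ KN"
  using floorlog_bounds[of N 2] N1 by simp
lemma KM_bd: "M < 2 ^ KM"
  using floorlog_bounds[of M 2] M4 by simp
lemma WW_pos: "0 < WW" by simp
lemma nn2_le: "nn + 2 \<le> WW"
proof -
  have "1 * (nn + 2) \<le> mm * (nn + 2)" by (rule mult_le_mono1) simp
  thus ?thesis by simp
qed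
lemma Ni_ge: "N \<le> Ni i" by (simp add: Ni_def)
lemma Ni_Suc: "Ni (Suc i) = Ni i + b" by (simp add: Ni_def)
lemma Ni0: "Ni 0 = N" by (simp add: Ni_def)

definition Lf :: "nat \<Rightarrow> nat \<Rightarrow> nat \<Rightarrow> sym" where
  "Lf x = (\<lambda>r c. if r div (2 * mm) < x div (2 * mm) then sb (r mod (2 * mm)) c else S0)"
definition Rf :: "nat \<Rightarrow> nat \<Rightarrow> nat \<Rightarrow> sym" where
  "Rf x = (\<lambda>r c. if r < mm then S0 else Lf (x - mm) (r - mm) c)"
definition Lb :: "nat \<Rightarrow> str2" where "Lb x = mk2 x WW (Lf x)"
definition Rb :: "nat \<Rightarrow> str2" where "Rb x = mk2 x WW (Rf x)"
definition LRb :: "nat \<Rightarrow> str2" where "LRb x = mk2 x (WW + WW) (hcat2 (Lf x) (Rf x) WW)"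

definition "rho1 = N mod (2 * mm)"
definition "rho2 = (N + mm) mod (2 * mm)"

definition ZFs :: "str2 set" where
  "ZFs = ZF KN KM 1 (nn + 2) \<union> ZF KN KM 1 WW \<union> ZF KN KM 1 pp \<union> ZF KN KM mm WW
     \<union> ZF KN KM rho1 WW \<union> ZF KN KM rho2 WW"
definition "SB1 = SF (2 * mm) WW sb KN (N div (2 * mm)) tt (\<lambda>i. Ni i div (2 * mm)) k"
definition "SB2 = SF (2 * mm) WW sb KN ((N - mm) div (2 * mm)) tt (\<lambda>i. (Ni i - mm) div (2 * mm)) k"
definition "SP = (if pp = 0 then {} else SF 1 pp (\<lambda>_ _. S0) KN N (2 * b) Ni k)"
definition "FP = (\<lambda>i. Lb (Ni i)) ` {..k} \<union> (\<lambda>i. Rb (Ni i)) ` {..k} \<union> (\<lambda>i. LRb (Ni i)) ` {..k}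
   \<union> (\<lambda>i. Cstr (Ni i) M) ` {..k} \<union> (\<lambda>i. Lb (Ni i - mm)) ` {i. i \<le> k \<and> mm < Ni i}"
definition "SS = FB nn \<union> FT nn \<union> ZFs \<union> SB1 \<union> SB2 \<union> SP \<union> FP"

lemma rho_mem: "Ni i mod (2 * mm) \<in> {rho1, rho2}" "Ni i - mm > 0 \<Longrightarrow> (Ni i - mm) mod (2 * mm) \<in> {rho1, rho2}"
proof -
  have ib: "i * b = i * tt * mm" using arg_cong[OF b_eq, of "\<lambda>x. i * x"] by (simp only: mult.assoc)
  have "Ni i = N + (i * tt) * mm" unfolding Ni_def ib ..
  thus "Ni i mod (2 * mm) \<in> {rho1, rho2}" using jm_mod[of N "i * tt" mm] unfolding rho1_def rho2_def by auto
  show "(Ni i - mm) mod (2 * mm) \<in> {rho1, rho2}"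
  proof (cases i)
    case 0
    have "N + mm = (N - mm) + 1 * (2 * mm)" using mmN by simp
    hence "(N + mm) mod (2 * mm) = (N - mm) mod (2 * mm)" by (metis mod_mult_self1)
    thus ?thesis using 0 unfolding rho2_def by (simp add: Ni_def)
  next
    case (Suc i')
    have "i * tt \<ge> 1" using Suc tt_pos by simp
    define q where "q = i * tt - 1"
    have q: "i * tt = Suc q" using \<open>i * tt \<ge> 1\<close> unfolding q_def by simp
    have "i * b = i * tt * mm" by (rule ib)
    also have "\<dots> = mm + q * mm" using q by simp
    finally have "Ni i - mm = N + q * mm" by (simp add: Ni_def)
    thus ?thesis using jm_mod[of N q mm] unfolding rho1_def rho2_def by auto
  qed
qed

end


context cp
begin

lemma hK: "1 < (2::nat) ^ KN" "mm < 2 ^ KN" "rho1 < 2 ^ KN" "rho2 < 2 ^ KN" "N div (2 * mm) < 2 ^ KN"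
  "(N - mm) div (2 * mm) < 2 ^ KN" "tt < 2 ^ KN" "N < 2 ^ KN" "2 * b < 2 ^ KN"
proof -
  have a: "2 * N < 2 ^ KN" by (rule KN_bd)
  have r: "rho1 < 2 * mm" "rho2 < 2 * mm" unfolding rho1_def rho2_def by simp_all
  show "1 < (2::nat) ^ KN" "mm < 2 ^ KN" "N < 2 ^ KN" "2 * b < 2 ^ KN" "tt < 2 ^ KN"
    using a N1 mmN bN tt_N by linarith+
  show "rho1 < 2 ^ KN" "rho2 < 2 ^ KN" using r a mmN by linarith+
  have "N div (2 * mm) \<le> N" "(N - mm) div (2 * mm) \<le> N" by (simp_all add: div_le_dividend le_trans[OF div_le_dividend])
  thus "N div (2 * mm) < 2 ^ KN" "(N - mm) div (2 * mm) < 2 ^ KN" using a by linarith+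
qed

lemma wK: "nn + 2 < 2 ^ KM" "WW < 2 ^ KM" "pp < 2 ^ KM"
  using KM_bd WW2 nn2_le by linarith+

lemma Lb_dec:
  assumes x: "0 < x"
    and st: "0 < x div (2 * mm) \<Longrightarrow> Stk (2 * mm) WW sb (x div (2 * mm)) \<in> S \<and> dec S (Stk (2 * mm) WW sb (x div (2 * mm)))"
    and zr: "0 < x mod (2 * mm) \<Longrightarrow> Z (x mod (2 * mm)) WW \<in> S \<and> dec S (Z (x mod (2 * mm)) WW)"
  shows "dec S (Lb x)"
proof -
  have dl: "r div (2 * mm) < x div (2 * mm) \<longleftrightarrow> r < x div (2 * mm) * (2 * mm)" for r
    using div_less_iff_less_mult[of "2 * mm" r "x div (2 * mm)"] by simp
  have xe: "x = x div (2 * mm) * (2 * mm) + x mod (2 * mm)" by (rule div_mult_mod_eq[symmetric])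
  consider (a) "x div (2 * mm) = 0" | (b) "x div (2 * mm) > 0" "x mod (2 * mm) = 0"
    | (c) "x div (2 * mm) > 0" "x mod (2 * mm) > 0" by auto
  thus ?thesis
  proof cases
    case a
    hence xm: "x mod (2 * mm) = x" using xe by simp
    have "Lb x = Z x WW" unfolding Lb_def Z_def by (rule mk2_ext) (simp add: Lf_def a)
    thus ?thesis using zr x xm by simp
  next
    case b
    hence e: "x div (2 * mm) * (2 * mm) = x" using xe by simp
    have "Lb x = mk2 (x div (2 * mm) * (2 * mm)) WW (\<lambda>r c. sb (r mod (2 * mm)) c)"
      unfolding e Lb_def by (rule mk2_ext) (use dl e in \<open>simp add: Lf_def\<close>)
    thus ?thesis using st b by (simp add: Stk_def)
  next
    case c
    have m1: "mk2 (x div (2 * mm) * (2 * mm)) WW (\<lambda>r c. sb (r mod (2 * mm)) c) \<in> S"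
      using st c by (simp add: Stk_def)
    have m2: "mk2 (x mod (2 * mm)) WW (\<lambda>_ _. S0) \<in> S" using zr c by (simp add: Z_def)
    show ?thesis unfolding Lb_def
    proof (rule dec_V[OF m1 m2])
      show "x = x div (2 * mm) * (2 * mm) + x mod (2 * mm)" by (rule xe)
      show "0 < x div (2 * mm) * (2 * mm)" using c by simp
      show "0 < x mod (2 * mm)" using c by simp
      fix r c' assume "r < x" "c' < WW"
      show "Lf x r c' = vcat2 (\<lambda>r c. sb (r mod (2 * mm)) c) (\<lambda>_ _. S0) (x div (2 * mm) * (2 * mm)) r c'"
        unfolding Lf_def vcat2_def using dl[of r] by simp
    qed
  qed
qed

lemma Rb_dec:
  assumes x: "mm \<le> x" and z: "Z mm WW \<in> S" "dec S (Z mm WW)" and l: "mm < x \<Longrightarrow> Lb (x - mm) \<in> S"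
  shows "dec S (Rb x)"
proof (cases "x = mm")
  case True
  have "Rb x = Z mm WW" unfolding Rb_def Z_def True by (rule mk2_ext) (simp add: Rf_def)
  thus ?thesis using z by simp
next
  case False
  hence xm: "mm < x" using x by simp
  have m1: "mk2 mm WW (\<lambda>_ _. S0) \<in> S" using z by (simp add: Z_def)
  have m2: "mk2 (x - mm) WW (Lf (x - mm)) \<in> S" using l xm by (simp add: Lb_def)
  show ?thesis unfolding Rb_def
    by (rule dec_V[OF m1 m2]) (use xm in \<open>auto simp: Rf_def vcat2_def\<close>)
qed

lemma LRb_dec:
  assumes "Lb x \<in> S" "Rb x \<in> S" shows "dec S (LRb x)"
proof -
  have m1: "mk2 x WW (Lf x) \<in> S" "mk2 x WW (Rf x) \<in> S" using assms by (simp_all add: Lb_def Rb_def)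
  show ?thesis unfolding LRb_def by (rule dec_H[OF m1]) auto
qed

lemma C_entry_eq: "C_entry x M r c = hcat2 (hcat2 (Lf x) (Rf x) WW) (\<lambda>_ _. S0) (WW + WW) r c"
  unfolding C_entry_def Let_def hcat2_def Lf_def Rf_def by auto

lemma Cstr_dec:
  assumes l: "Lb x \<in> S" "Rb x \<in> S" "LRb x \<in> S" and z: "0 < pp \<Longrightarrow> Z x pp \<in> S"
  shows "dec S (Cstr x M)"
proof (cases "pp = 0")
  case True
  hence M: "M = WW + WW" using WW2 by simp
  have m1: "mk2 x WW (Lf x) \<in> S" "mk2 x WW (Rf x) \<in> S" using l by (simp_all add: Lb_def Rb_def)
  show ?thesis unfolding Cstr_def
    by (rule dec_H[OF m1 M]) (use M in \<open>auto simp: C_entry_eq hcat2_def\<close>)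
next
  case False
  have m1: "mk2 x (WW + WW) (hcat2 (Lf x) (Rf x) WW) \<in> S" using l by (simp add: LRb_def)
  have m2: "mk2 x pp (\<lambda>_ _. S0) \<in> S" using z False by (simp add: Z_def)
  have M: "M = (WW + WW) + pp" using WW2 by simp
  show ?thesis unfolding Cstr_def
    by (rule dec_H[OF m1 m2 M]) (simp add: C_entry_eq)
qed

end


context cp
begin

lemma subs: "FB nn \<subseteq> SS" "FT nn \<subseteq> SS" "ZF KN KM 1 (nn + 2) \<subseteq> SS" "ZF KN KM 1 WW \<subseteq> SS"
  "ZF KN KM 1 pp \<subseteq> SS" "ZF KN KM mm WW \<subseteq> SS" "ZF KN KM rho1 WW \<subseteq> SS" "ZF KN KM rho2 WW \<subseteq> SS"
  "SB1 \<subseteq> SS" "SB2 \<subseteq> SS" "SP \<subseteq> SS" "FP \<subseteq> SS"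
  unfolding SS_def ZFs_def by auto

lemma zmem:
  "Z 1 (nn + 2) \<in> SS \<and> dec SS (Z 1 (nn + 2))"
  "Z 1 WW \<in> SS \<and> dec SS (Z 1 WW)"
  "Z mm WW \<in> SS \<and> dec SS (Z mm WW)"
  "0 < pp \<Longrightarrow> Z 1 pp \<in> SS \<and> dec SS (Z 1 pp)"
  "0 < rho1 \<Longrightarrow> Z rho1 WW \<in> SS \<and> dec SS (Z rho1 WW)"
  "0 < rho2 \<Longrightarrow> Z rho2 WW \<in> SS \<and> dec SS (Z rho2 WW)"
proof -
  have g: "Z h w \<in> SS \<and> dec SS (Z h w)" if "0 < h" "0 < w" "h < 2 ^ KN" "w < 2 ^ KM" "ZF KN KM h w \<subseteq> SS" for h w
    using ZF_mem[OF that(1,2), of KN KM] ZF_dec[OF that(3,4,5)] that(5) by blast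
  show "Z 1 (nn + 2) \<in> SS \<and> dec SS (Z 1 (nn + 2))" by (rule g) (use hK wK subs in auto)
  show "Z 1 WW \<in> SS \<and> dec SS (Z 1 WW)" by (rule g) (use hK wK subs in auto)
  show "Z mm WW \<in> SS \<and> dec SS (Z mm WW)" by (rule g) (use hK wK subs in auto)
  show "0 < pp \<Longrightarrow> Z 1 pp \<in> SS \<and> dec SS (Z 1 pp)" by (rule g) (use hK wK subs in auto)
  show "0 < rho1 \<Longrightarrow> Z rho1 WW \<in> SS \<and> dec SS (Z rho1 WW)" by (rule g) (use hK wK subs in auto)
  show "0 < rho2 \<Longrightarrow> Z rho2 WW \<in> SS \<and> dec SS (Z rho2 WW)" by (rule g) (use hK wK subs in auto)
qed

lemma dBB: "dec SS (BB nn)"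
proof -
  have "BB nn \<in> FT nn" by (simp add: FT_def)
  thus ?thesis using FT_dec[OF subs(2) subs(1)] zmem(1,2) by blast
qed

lemma NiS: "Ni (Suc i) = Ni i + tt * mm"
proof -
  have "Ni i + b = Ni i + tt * mm" using b_eq by (rule arg_cong)
  thus ?thesis using Ni_Suc[of i] by simp
qed

lemma Ni_mm: "mm \<le> Ni i" using Ni_ge[of i] mmN by linarith

lemma NiS2: "Ni (Suc i) - mm = (Ni i - mm) + tt * mm"
  using NiS[of i] Ni_mm[of i] by simp

lemma dSB1: "s \<in> SB1 \<Longrightarrow> dec SS s"
  unfolding SB1_def
proof (rule SF_dec[where xs = "\<lambda>i. Ni i div (2 * mm)"])
  show "dec SS (mk2 (2 * mm) WW sb)" using dBB by (simp add: BB_def)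
  show "SF (2 * mm) WW sb KN (N div (2 * mm)) tt (\<lambda>i. Ni i div (2 * mm)) k \<subseteq> SS"
    using subs(9) by (simp add: SB1_def)
  show "N div (2 * mm) < 2 ^ KN" "tt < 2 ^ KN" using hK by auto
  show "Ni 0 div (2 * mm) = N div (2 * mm)" by (simp add: Ni0)
  fix i show "Ni (Suc i) div (2 * mm) = Ni i div (2 * mm) + tt div 2 \<or>
      Ni (Suc i) div (2 * mm) = Ni i div (2 * mm) + (tt - tt div 2)"
    unfolding NiS by (rule divstep) simp
qed simp

lemma dSB2: "s \<in> SB2 \<Longrightarrow> dec SS s"
  unfolding SB2_def
proof (rule SF_dec[where xs = "\<lambda>i. (Ni i - mm) div (2 * mm)"])
  show "dec SS (mk2 (2 * mm) WW sb)" using dBB by (simp add: BB_def)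
  show "SF (2 * mm) WW sb KN ((N - mm) div (2 * mm)) tt (\<lambda>i. (Ni i - mm) div (2 * mm)) k \<subseteq> SS"
    using subs(10) by (simp add: SB2_def)
  show "(N - mm) div (2 * mm) < 2 ^ KN" "tt < 2 ^ KN" using hK by auto
  show "(Ni 0 - mm) div (2 * mm) = (N - mm) div (2 * mm)" by (simp add: Ni0)
  fix i show "(Ni (Suc i) - mm) div (2 * mm) = (Ni i - mm) div (2 * mm) + tt div 2 \<or>
      (Ni (Suc i) - mm) div (2 * mm) = (Ni i - mm) div (2 * mm) + (tt - tt div 2)"
    unfolding NiS2 by (rule divstep) simp
qed simp

lemma dSP: "s \<in> SP \<Longrightarrow> dec SS s"
proof (cases "pp = 0")
  case True thus "s \<in> SP \<Longrightarrow> dec SS s" by (simp add: SP_def)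
next
  case False
  assume s: "s \<in> SP"
  hence s': "s \<in> SF 1 pp (\<lambda>_ _. S0) KN N (2 * b) Ni k" using False by (simp add: SP_def)
  show ?thesis
  proof (rule SF_dec[OF _ _ _ _ _ _ _ s'])
    show "dec SS (mk2 1 pp (\<lambda>_ _. S0))" using zmem(4) False by (simp add: Z_def)
    show "SF 1 pp (\<lambda>_ _. S0) KN N (2 * b) Ni k \<subseteq> SS" using subs(11) False by (simp add: SP_def)
    show "N < 2 ^ KN" "2 * b < 2 ^ KN" using hK by auto
    show "Ni 0 = N" by (rule Ni0)
    fix i show "Ni (Suc i) = Ni i + 2 * b div 2 \<or> Ni (Suc i) = Ni i + (2 * b - 2 * b div 2)"
      using Ni_Suc[of i] by simp
  qed simp
qed

lemma stk1: "i \<le> k \<Longrightarrow> 0 < Ni i div (2 * mm) \<Longrightarrow>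
   Stk (2 * mm) WW sb (Ni i div (2 * mm)) \<in> SS \<and> dec SS (Stk (2 * mm) WW sb (Ni i div (2 * mm)))"
proof -
  assume a: "i \<le> k" "0 < Ni i div (2 * mm)"
  hence "Stk (2 * mm) WW sb (Ni i div (2 * mm)) \<in> SB1" unfolding SB1_def SF_def by auto
  thus ?thesis using subs(9) dSB1 by blast
qed

lemma stk2: "i \<le> k \<Longrightarrow> 0 < (Ni i - mm) div (2 * mm) \<Longrightarrow>
   Stk (2 * mm) WW sb ((Ni i - mm) div (2 * mm)) \<in> SS \<and> dec SS (Stk (2 * mm) WW sb ((Ni i - mm) div (2 * mm)))"
proof -
  assume a: "i \<le> k" "0 < (Ni i - mm) div (2 * mm)"
  hence "Stk (2 * mm) WW sb ((Ni i - mm) div (2 * mm)) \<in> SB2" unfolding SB2_def SF_def by auto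
  thus ?thesis using subs(10) dSB2 by blast
qed

lemma zr: "x mod (2 * mm) \<in> {rho1, rho2} \<Longrightarrow> 0 < x mod (2 * mm) \<Longrightarrow>
   Z (x mod (2 * mm)) WW \<in> SS \<and> dec SS (Z (x mod (2 * mm)) WW)"
  using zmem(5,6) by auto

lemma Ni_pos: "0 < Ni i" using Ni_ge[of i] N1 by linarith

lemma dLb1: "i \<le> k \<Longrightarrow> dec SS (Lb (Ni i))"
  by (rule Lb_dec[OF Ni_pos]) (use stk1 zr rho_mem(1) in auto)

lemma dLb2: "i \<le> k \<Longrightarrow> mm < Ni i \<Longrightarrow> dec SS (Lb (Ni i - mm))"
  by (rule Lb_dec) (use stk2 zr rho_mem(2) in auto)

lemma FPmem: "i \<le> k \<Longrightarrow> Lb (Ni i) \<in> SS" "i \<le> k \<Longrightarrow> Rb (Ni i) \<in> SS" "i \<le> k \<Longrightarrow> LRb (Ni i) \<in> SS"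
  "i \<le> k \<Longrightarrow> Cstr (Ni i) M \<in> SS" "i \<le> k \<Longrightarrow> mm < Ni i \<Longrightarrow> Lb (Ni i - mm) \<in> SS"
  using subs(12) unfolding FP_def by auto

lemma dRb: "i \<le> k \<Longrightarrow> dec SS (Rb (Ni i))"
  by (rule Rb_dec[OF Ni_mm]) (use zmem(3) FPmem(5) in auto)

lemma dLRb: "i \<le> k \<Longrightarrow> dec SS (LRb (Ni i))"
  by (rule LRb_dec) (use FPmem in auto)

lemma dC: "i \<le> k \<Longrightarrow> dec SS (Cstr (Ni i) M)"
proof (rule Cstr_dec)
  assume i: "i \<le> k"
  show "Lb (Ni i) \<in> SS" "Rb (Ni i) \<in> SS" "LRb (Ni i) \<in> SS" using FPmem i by auto
  assume p: "0 < pp"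
  have "Stk 1 pp (\<lambda>_ _. S0) (Ni i) \<in> SP" using p i Ni_pos[of i] unfolding SP_def SF_def by auto
  moreover have "Stk 1 pp (\<lambda>_ _. S0) (Ni i) = Z (Ni i) pp" by (simp add: Stk_def Z_def)
  ultimately show "Z (Ni i) pp \<in> SS" using subs(11) by auto
qed

lemma SS_dec: "s \<in> SS \<Longrightarrow> dec SS s"
proof -
  assume s: "s \<in> SS"
  have zf: "dec SS s" if "s \<in> ZFs"
  proof -
    have "\<And>h w. s \<in> ZF KN KM h w \<Longrightarrow> h < 2 ^ KN \<Longrightarrow> w < 2 ^ KM \<Longrightarrow> ZF KN KM h w \<subseteq> SS \<Longrightarrow> dec SS s"
      using ZF_dec by blast
    thus ?thesis using that hK wK subs unfolding ZFs_def by blast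
  qed
  have fp: "dec SS s" if "s \<in> FP"
    using that dLb1 dLb2 dRb dLRb dC unfolding FP_def by auto
  show ?thesis using s zf fp dSB1 dSB2 dSP FB_dec[OF subs(1)] FT_dec[OF subs(2) subs(1)] zmem(1,2)
    unfolding SS_def by blast
qed

end


lemma sum6: "(a::nat) \<le> b1 + b2 + b3 + b4 + b5 + b6 \<Longrightarrow> b1 \<le> K \<Longrightarrow> b2 \<le> K \<Longrightarrow> b3 \<le> K
  \<Longrightarrow> b4 \<le> K \<Longrightarrow> b5 \<le> K \<Longrightarrow> b6 \<le> K \<Longrightarrow> a \<le> 6 * K"
  by linarith

lemma sum7: "(a::nat) \<le> b1 + b2 + b3 + b4 + b5 + b6 + b7 \<Longrightarrow> b1 \<le> 6 * (n + 1) + 1 \<Longrightarrow>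
  b2 \<le> 5 * (n + 1) + 1 \<Longrightarrow> b3 \<le> 6 * (2 * (K + 1) + 2 * (L + 1)) \<Longrightarrow>
  b4 \<le> 4 * (K + 1) + (k + 1) \<Longrightarrow> b5 \<le> 4 * (K + 1) + (k + 1) \<Longrightarrow> b6 \<le> 4 * (K + 1) + (k + 1) \<Longrightarrow>
  b7 \<le> 5 * (k + 1) \<Longrightarrow> a \<le> 11 * n + 24 * K + 12 * L + 8 * k + 57"
  by (simp add: algebra_simps)

lemma arith_final: "(a::real) \<le> x + 2 \<Longrightarrow> b \<le> y + 1 \<Longrightarrow> c \<le> y \<Longrightarrow> 2 \<le> y \<Longrightarrow> 0 \<le> x \<Longrightarrow> 0 \<le> d
  \<Longrightarrow> 11 * c + 24 * a + 12 * b + 8 * d + 57 \<le> 100 * (x + y + d)"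
  by (smt (verit))

context cp
begin

lemma Ni_ne[simp]: "Ni i \<noteq> 0" using Ni_pos[of i] by simp

lemma SS_nz: "s \<in> SS \<Longrightarrow> concat s \<noteq> []"
proof -
  assume s: "s \<in> SS"
  have zf: "concat s \<noteq> []" if "s \<in> ZFs" using that ZF_nz unfolding ZFs_def by blast
  have sb: "concat s \<noteq> []" if "s \<in> SB1 \<union> SB2 \<union> SP"
    using that SF_nz[of "2 * mm" WW] SF_nz[of 1 pp] unfolding SB1_def SB2_def SP_def
    by (auto split: if_splits)
  have fp: "concat s \<noteq> []" if "s \<in> FP"
    using that M4 unfolding FP_def Lb_def Rb_def LRb_def Cstr_def by (auto simp: Ni_ne)
  show ?thesis using s zf sb fp FB_nz FT_nz unfolding SS_def by blast
qed

lemma SS_finite: "finite SS"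
  unfolding SS_def ZFs_def SB1_def SB2_def SP_def FP_def
  by (simp add: FB_finite FT_finite)

lemma SS_ne: "SS \<noteq> {}"
  using subs(1) by (auto simp: FB_def)

lemma SS_card: "card SS \<le> 11 * nn + 24 * KN + 12 * KM + 8 * k + 57"
proof -
  have c: "card (f ` {..k}) \<le> k + 1" for f :: "nat \<Rightarrow> str2"
    using card_image_le[of "{..k}" f] by simp
  have c2: "card ((\<lambda>i. Lb (Ni i - mm)) ` {i. i \<le> k \<and> mm < Ni i}) \<le> k + 1"
  proof -
    have "card ((\<lambda>i. Lb (Ni i - mm)) ` {i. i \<le> k \<and> mm < Ni i}) \<le> card {i. i \<le> k \<and> mm < Ni i}"
      by (rule card_image_le) simp
    also have "\<dots> \<le> card {..k}" by (rule card_mono) auto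
    finally show ?thesis by simp
  qed
  have fp: "card FP \<le> 5 * (k + 1)"
  proof -
    have "card FP \<le> card ((\<lambda>i. Lb (Ni i)) ` {..k}) + card ((\<lambda>i. Rb (Ni i)) ` {..k})
      + card ((\<lambda>i. LRb (Ni i)) ` {..k}) + card ((\<lambda>i. Cstr (Ni i) M) ` {..k})
      + card ((\<lambda>i. Lb (Ni i - mm)) ` {i. i \<le> k \<and> mm < Ni i})"
      unfolding FP_def by (intro order.trans[OF card_Un_le] add_mono order.refl)
    also have "\<dots> \<le> (k + 1) + (k + 1) + (k + 1) + (k + 1) + (k + 1)"
      by (intro add_mono c c2)
    finally show ?thesis by simp
  qed
  have zf: "card ZFs \<le> 6 * (2 * (KN + 1) + 2 * (KM + 1))"
  proof -
    have "card ZFs \<le> card (ZF KN KM 1 (nn + 2)) + card (ZF KN KM 1 WW) + card (ZF KN KM 1 pp)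
      + card (ZF KN KM mm WW) + card (ZF KN KM rho1 WW) + card (ZF KN KM rho2 WW)"
      unfolding ZFs_def by (intro order.trans[OF card_Un_le] add_mono order.refl)
    thus ?thesis using ZF_card[of KN KM 1 "nn + 2"] ZF_card[of KN KM 1 WW] ZF_card[of KN KM 1 pp]
      ZF_card[of KN KM mm WW] ZF_card[of KN KM rho1 WW] ZF_card[of KN KM rho2 WW] by (rule sum6)
  qed
  have sb: "card SB1 \<le> 4 * (KN + 1) + (k + 1)" "card SB2 \<le> 4 * (KN + 1) + (k + 1)"
    "card SP \<le> 4 * (KN + 1) + (k + 1)"
  proof -
    show "card SB1 \<le> 4 * (KN + 1) + (k + 1)" unfolding SB1_def by (rule SF_card)
    show "card SB2 \<le> 4 * (KN + 1) + (k + 1)" unfolding SB2_def by (rule SF_card)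
    show "card SP \<le> 4 * (KN + 1) + (k + 1)"
    proof (cases "pp = 0")
      case True thus ?thesis by (simp add: SP_def)
    next
      case False
      hence "SP = SF 1 pp (\<lambda>_ _. S0) KN N (2 * b) Ni k" by (simp add: SP_def)
      thus ?thesis using SF_card by presburger
    qed
  qed
  have "card SS \<le> card (FB nn) + card (FT nn) + card ZFs + card SB1 + card SB2 + card SP + card FP"
    unfolding SS_def by (intro order.trans[OF card_Un_le] add_mono order.refl)
  thus ?thesis by (rule sum7[OF _ FB_card[of nn] FT_card[of nn] zf sb fp])
qed

lemma real_bounds: "real KN \<le> log 2 (real N) + 2" "real KM \<le> log 2 (real M) + 1"
  "real nn \<le> log 2 (real M)" "2 \<le> log 2 (real M)" "0 \<le> log 2 (real N)"
proof -
  have fl: "real (floorlog 2 x) \<le> log 2 (real x) + 1" if "1 \<le> x" for x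
  proof -
    have l0: "0 \<le> log 2 (real x)" using that by simp
    hence f0: "0 \<le> \<lfloor>log 2 (real x)\<rfloor>" by simp
    have "floorlog 2 x = nat \<lfloor>log 2 (real x)\<rfloor> + 1" using that by (simp add: floorlog_def)
    hence "real (floorlog 2 x) = real_of_int \<lfloor>log 2 (real x)\<rfloor> + 1" using f0 by simp
    also have "\<dots> \<le> log 2 (real x) + 1" by simp
    finally show ?thesis .
  qed
  show "real KN \<le> log 2 (real N) + 2" using fl[OF N1] by simp
  show "real KM \<le> log 2 (real M) + 1" using fl[of M] M4 by simp
  have "1 * mm \<le> (nn + 2) * mm" by (rule mult_le_mono1) simp
  hence "mm \<le> WW" by (simp add: mult.commute)
  hence "(2::nat) ^ nn \<le> M" using WW2 by linarith
  hence "real ((2::nat) ^ nn) \<le> real M" by (simp only: of_nat_le_iff)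
  hence "(2::real) ^ nn \<le> real M" by simp
  thus "real nn \<le> log 2 (real M)" by (intro le_log_of_power) auto
  have "(2::real) ^ 2 \<le> real M" using M4 by simp
  hence "real (2::nat) \<le> log 2 (real M)" by (intro le_log_of_power) auto
  thus "2 \<le> log 2 (real M)" by simp
  show "0 \<le> log 2 (real N)" using N1 by simp
qed

lemma main:
  "\<exists>G. is_slp2 G \<and> real (card (nts G)) \<le> 100 * (log 2 (real N) + log 2 (real M) + real k) \<and>
     (\<forall>i\<le>k. \<exists>X\<in>nts G. derives G X (Cstr (N + i * b) M))"
proof -
  obtain G where G: "is_slp2 G" "card (nts G) = card SS" "\<forall>s\<in>SS. \<exists>X\<in>nts G. derives G X s"
    using slp_of_set[OF SS_finite SS_ne] SS_nz SS_dec by blast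
  have "real (card (nts G)) \<le> real (11 * nn + 24 * KN + 12 * KM + 8 * k + 57)"
    using G(2) SS_card by simp
  also have "\<dots> = 11 * real nn + 24 * real KN + 12 * real KM + 8 * real k + 57" by simp
  also have "\<dots> \<le> 100 * (log 2 (real N) + log 2 (real M) + real k)"
    using arith_final[OF real_bounds(1,2,3,4,5), of "real k"] by simp
  finally have card: "real (card (nts G)) \<le> 100 * (log 2 (real N) + log 2 (real M) + real k)" .
  have "\<forall>i\<le>k. \<exists>X\<in>nts G. derives G X (Cstr (N + i * b) M)"
  proof (intro allI impI)
    fix i assume "i \<le> k"
    hence "Cstr (Ni i) M \<in> SS" by (rule FPmem(4))
    thus "\<exists>X\<in>nts G. derives G X (Cstr (N + i * b) M)" using G(3) by (simp add: Ni_def)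
  qed
  thus ?thesis using G(1) card by blast
qed

end


theorem mainTheorem9:
  shows "\<exists>c::real. c > 0 \<and>
    (\<forall>N M b k :: nat. N \<ge> 1 \<longrightarrow> M \<ge> 4 \<longrightarrow> Mprime M \<le> N \<longrightarrow>
       0 < b \<longrightarrow> b \<le> N \<longrightarrow> Mprime M dvd b \<longrightarrow>
       (\<exists>G. is_slp2 G \<and>
          real (card (nts G)) \<le> c * (log 2 (real N) + log 2 (real M) + real k) \<and>
          (\<forall>i\<le>k. \<exists>X\<in>nts G. derives G X (Cstr (N + i * b) M))))"
proof (intro exI[of _ 100] conjI)
  show "(0::real) < 100" by simp
  show "\<forall>N M b k :: nat. N \<ge> 1 \<longrightarrow> M \<ge> 4 \<longrightarrow> Mprime M \<le> N \<longrightarrow>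
       0 < b \<longrightarrow> b \<le> N \<longrightarrow> Mprime M dvd b \<longrightarrow>
       (\<exists>G. is_slp2 G \<and>
          real (card (nts G)) \<le> 100 * (log 2 (real N) + log 2 (real M) + real k) \<and>
          (\<forall>i\<le>k. \<exists>X\<in>nts G. derives G X (Cstr (N + i * b) M)))"
  proof (intro allI impI)
    fix N M b k :: nat
    assume a: "N \<ge> 1" "M \<ge> 4" "Mprime M \<le> N" "0 < b" "b \<le> N" "Mprime M dvd b"
    interpret cp N M b k by unfold_locales (use a in auto)
    show "\<exists>G. is_slp2 G \<and>
          real (card (nts G)) \<le> 100 * (log 2 (real N) + log 2 (real M) + real k) \<and>
          (\<forall>i\<le>k. \<exists>X\<in>nts G. derives G X (Cstr (N + i * b) M))" by (rule main)
  qed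
qed

end
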